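(* Let $F$ be a field of characteristic two and let $(A,\sigma)$ be a totally decomposable central simple $F$-algebra with orthogonal involution. If $x\in\mathrm{Sym}(A,\sigma)^+$, then $x^2\in Q(\mathfrak{Pf}(A,\sigma))$.
   Context: Involutions are of the first kind. $(A,\sigma)$ is totally decomposable if $(A,\sigma)\simeq\bigotimes_{i=1}^n(Q_i,\sigma_i)$ with quaternion $F$-algebras with involution. $\mathrm{Sym}(A,\sigma)^+=\{x\in A\mid\sigma(x)=x,\ x^2\in F\}$. The Pfister invariant $\mathfrak{Pf}(A,\sigma)$ is the bilinear Pfister form $\langle\!\langle\alpha_1,\dots,\alpha_n\rangle\!\rangle=\langle1,\alpha_1\rangle\otimes\cdots\otimes\langle1,\alpha_n\rangle$ where $\alpha_i\in F^\times$ represents $\mathrm{disc}\,\sigma_i\in F^\times/F^{\times2}$ (independent of the decomposition up to isometry). For a symmetric bilinear form $\mathfrak b$ on $V$, $Q(\mathfrak b)=\{\mathfrak b(v,v)\mid 0\ne v\in V\}\cup\{0\}$. *)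

theory Defs
  imports Main "HOL-Library.FuncSet"
begin

text \<open>The quaternion algebra [a,b)_F (b nonzero) has F-basis e0 = 1, e1 = u, e2 = v, e3 = uv with
  u^2 + u = a, v^2 = b, v u = (u + 1) v.  Every quaternion algebra over a field of characteristic
  two is of this form.  Elements are coefficient vectors  nat => F  (only indices < 4 matter).
  qtab a b k l lists the coordinates of e_k * e_l.\<close>

definition qtab :: "'a::field \<Rightarrow> 'a \<Rightarrow> nat \<Rightarrow> nat \<Rightarrow> 'a list" where
  "qtab a b k l =
    (if k = 0 then [of_bool (l = 0), of_bool (l = 1), of_bool (l = 2), of_bool (l = 3)]
     else if l = 0 then [of_bool (k = 0), of_bool (k = 1), of_bool (k = 2), of_bool (k = 3)]
     else if k = 1 \<and> l = 1 then [a, 1, 0, 0]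
     else if k = 1 \<and> l = 2 then [0, 0, 0, 1]
     else if k = 1 \<and> l = 3 then [0, 0, a, 1]
     else if k = 2 \<and> l = 1 then [0, 0, 1, 1]
     else if k = 2 \<and> l = 2 then [b, 0, 0, 0]
     else if k = 2 \<and> l = 3 then [b, b, 0, 0]
     else if k = 3 \<and> l = 1 then [0, 0, a, 0]
     else if k = 3 \<and> l = 2 then [0, b, 0, 0]
     else [a * b, 0, 0, 0])"

definition qconst :: "'a::field \<Rightarrow> 'a \<Rightarrow> nat \<Rightarrow> nat \<Rightarrow> nat \<Rightarrow> 'a" where
  "qconst a b k l m = qtab a b k l ! m"

definition qmul :: "'a::field \<Rightarrow> 'a \<Rightarrow> (nat \<Rightarrow> 'a) \<Rightarrow> (nat \<Rightarrow> 'a) \<Rightarrow> nat \<Rightarrow> 'a" where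
  "qmul a b x y = (\<lambda>m. \<Sum>k<4. \<Sum>l<4. x k * y l * qconst a b k l m)"

definition qone :: "nat \<Rightarrow> 'a::field" where
  "qone = (\<lambda>m. of_bool (m = 0))"

text \<open>An F-linear map on the quaternion algebra given by a 4x4 matrix M:
  it sends e_k to  sum_l M k l e_l.\<close>
definition qapp :: "(nat \<Rightarrow> nat \<Rightarrow> 'a::field) \<Rightarrow> (nat \<Rightarrow> 'a) \<Rightarrow> nat \<Rightarrow> 'a" where
  "qapp M x = (\<lambda>l. \<Sum>k<4. x k * M k l)"

definition q_involution :: "'a::field \<Rightarrow> 'a \<Rightarrow> (nat \<Rightarrow> nat \<Rightarrow> 'a) \<Rightarrow> bool" where
  "q_involution a b M \<longleftrightarrow>
     (\<forall>x y. \<forall>m<4. qapp M (qmul a b x y) m = qmul a b (qapp M y) (qapp M x) m) \<and>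
     (\<forall>x. \<forall>m<4. qapp M (qapp M x) m = x m)"

definition q_alt :: "(nat \<Rightarrow> nat \<Rightarrow> 'a::field) \<Rightarrow> (nat \<Rightarrow> 'a) \<Rightarrow> bool" where
  "q_alt M y \<longleftrightarrow> (\<exists>x. \<forall>m<4. y m = x m - qapp M x m)"

text \<open>In characteristic two an involution of the first kind is orthogonal iff 1 is not alternating
  (KMRT, Prop. 2.6).\<close>
definition q_orthogonal :: "'a::field \<Rightarrow> 'a \<Rightarrow> (nat \<Rightarrow> nat \<Rightarrow> 'a) \<Rightarrow> bool" where
  "q_orthogonal a b M \<longleftrightarrow> q_involution a b M \<and> \<not> q_alt M qone"

definition qnrd :: "'a::field \<Rightarrow> 'a \<Rightarrow> (nat \<Rightarrow> 'a) \<Rightarrow> 'a" where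
  "qnrd a b x = x 0 ^ 2 + x 0 * x 1 + a * x 1 ^ 2 + b * (x 2 ^ 2 + x 2 * x 3 + a * x 3 ^ 2)"

text \<open>alpha represents disc sigma in F^x/F^x2: disc sigma = (-1)^(deg/2) Nrd(y) for an invertible
  alternating y (KMRT 7.1); for quaternions in characteristic two this is Nrd(y).  Every representative
  of the square class is of this form (scale y).\<close>
definition q_disc_rep :: "'a::field \<Rightarrow> 'a \<Rightarrow> (nat \<Rightarrow> nat \<Rightarrow> 'a) \<Rightarrow> 'a \<Rightarrow> bool" where
  "q_disc_rep a b M \<alpha> \<longleftrightarrow> \<alpha> \<noteq> 0 \<and> (\<exists>y. q_alt M y \<and> qnrd a b y = \<alpha>)"

text \<open>The tensor product Q_0 (x) ... (x) Q_{n-1}, Q_i = [a i, b i), has basis e_s = (x)_i e_{s i}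
  indexed by s in tidx n; elements are coefficient functions vanishing outside tidx n.\<close>
definition tidx :: "nat \<Rightarrow> (nat \<Rightarrow> nat) set" where
  "tidx n = PiE {..<n} (\<lambda>_. {..<4})"

definition tcarrier :: "nat \<Rightarrow> ((nat \<Rightarrow> nat) \<Rightarrow> 'a::field) set" where
  "tcarrier n = {x. \<forall>s. s \<notin> tidx n \<longrightarrow> x s = 0}"

definition tmul :: "nat \<Rightarrow> (nat \<Rightarrow> 'a::field) \<Rightarrow> (nat \<Rightarrow> 'a) \<Rightarrow>
    ((nat \<Rightarrow> nat) \<Rightarrow> 'a) \<Rightarrow> ((nat \<Rightarrow> nat) \<Rightarrow> 'a) \<Rightarrow> (nat \<Rightarrow> nat) \<Rightarrow> 'a" where
  "tmul n a b x y = (\<lambda>r. if r \<in> tidx n then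
      (\<Sum>s\<in>tidx n. \<Sum>t\<in>tidx n. x s * y t * (\<Prod>i<n. qconst (a i) (b i) (s i) (t i) (r i)))
    else 0)"

definition tscal :: "nat \<Rightarrow> 'a::field \<Rightarrow> (nat \<Rightarrow> nat) \<Rightarrow> 'a" where
  "tscal n c = (\<lambda>r. if r = restrict (\<lambda>_. 0) {..<n} then c else 0)"

definition tinv :: "nat \<Rightarrow> (nat \<Rightarrow> nat \<Rightarrow> nat \<Rightarrow> 'a::field) \<Rightarrow>
    ((nat \<Rightarrow> nat) \<Rightarrow> 'a) \<Rightarrow> (nat \<Rightarrow> nat) \<Rightarrow> 'a" where
  "tinv n M x = (\<lambda>r. if r \<in> tidx n then (\<Sum>s\<in>tidx n. x s * (\<Prod>i<n. M i (s i) (r i))) else 0)"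

definition sym_plus :: "nat \<Rightarrow> (nat \<Rightarrow> 'a::field) \<Rightarrow> (nat \<Rightarrow> 'a) \<Rightarrow> (nat \<Rightarrow> nat \<Rightarrow> nat \<Rightarrow> 'a) \<Rightarrow>
    ((nat \<Rightarrow> nat) \<Rightarrow> 'a) set" where
  "sym_plus n a b M = {x \<in> tcarrier n. tinv n M x = x \<and> (\<exists>c. tmul n a b x x = tscal n c)}"

text \<open><<alpha_0,...,alpha_{n-1}>> = <1,alpha_0> (x) ... (x) <1,alpha_{n-1}>, on the space with basis
  indexed by subsets S of {..<n}: the diagonal form with entries prod_{i in S} alpha_i.\<close>
definition pfister_form :: "nat \<Rightarrow> (nat \<Rightarrow> 'a::field) \<Rightarrow> (nat set \<Rightarrow> 'a) \<Rightarrow> (nat set \<Rightarrow> 'a) \<Rightarrow> 'a" where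
  "pfister_form n \<alpha> v w = (\<Sum>S\<in>Pow {..<n}. (\<Prod>i\<in>S. \<alpha> i) * v S * w S)"

definition pfister_Q :: "nat \<Rightarrow> (nat \<Rightarrow> 'a::field) \<Rightarrow> 'a set" where
  "pfister_Q n \<alpha> = {pfister_form n \<alpha> v v | v. (\<exists>S\<in>Pow {..<n}. v S \<noteq> 0)} \<union> {0}"

end

theory Submission
  imports Defs
begin

datatype 'a qt = Qt 'a 'a 'a 'a

instantiation qt :: (ab_group_add) ab_group_add
begin
fun plus_qt :: "'a qt \<Rightarrow> 'a qt \<Rightarrow> 'a qt" where
  "Qt x0 x1 x2 x3 + Qt y0 y1 y2 y3 = Qt (x0+y0) (x1+y1) (x2+y2) (x3+y3)"
fun minus_qt :: "'a qt \<Rightarrow> 'a qt \<Rightarrow> 'a qt" where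
  "Qt x0 x1 x2 x3 - Qt y0 y1 y2 y3 = Qt (x0-y0) (x1-y1) (x2-y2) (x3-y3)"
fun uminus_qt :: "'a qt \<Rightarrow> 'a qt" where
  "- Qt x0 x1 x2 x3 = Qt (-x0) (-x1) (-x2) (-x3)"
definition zero_qt :: "'a qt" where "0 = Qt 0 0 0 0"
instance
proof
  fix x y z :: "'a qt"
  show "x + y + z = x + (y + z)" by (cases x; cases y; cases z) (simp add: add.assoc)
  show "x + y = y + x" by (cases x; cases y) (simp add: add.commute)
  show "0 + x = x" by (cases x) (simp add: zero_qt_def)
  show "- x + x = 0" by (cases x) (simp add: zero_qt_def)
  show "x - y = x + - y" by (cases x; cases y) simp
qed
end

fun qm :: "'a::field \<Rightarrow> 'a \<Rightarrow> 'a qt \<Rightarrow> 'a qt \<Rightarrow> 'a qt" where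
 "qm a b (Qt x0 x1 x2 x3) (Qt y0 y1 y2 y3) =
   Qt (x0*y0 + a*x1*y1 + b*x2*y2 + b*x2*y3 + a*b*x3*y3)
      (x0*y1 + x1*y0 + x1*y1 + b*x2*y3 + b*x3*y2)
      (x0*y2 + x2*y0 + a*x1*y3 + x2*y1 + a*x3*y1)
      (x0*y3 + x3*y0 + x1*y2 + x1*y3 + x2*y1)"

fun qsc :: "'a::field \<Rightarrow> 'a qt \<Rightarrow> 'a qt" where
  "qsc c (Qt x0 x1 x2 x3) = Qt (c*x0) (c*x1) (c*x2) (c*x3)"

definition qs :: "'a::field \<Rightarrow> 'a qt" where "qs c = Qt c 0 0 0"

fun qbar :: "'a::field qt \<Rightarrow> 'a qt" where
  "qbar (Qt x0 x1 x2 x3) = Qt (x0+x1) x1 x2 x3"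

fun qtr :: "'a::field qt \<Rightarrow> 'a" where
  "qtr (Qt x0 x1 x2 x3) = x1"

fun qn :: "'a::field \<Rightarrow> 'a \<Rightarrow> 'a qt \<Rightarrow> 'a" where
  "qn a b (Qt x0 x1 x2 x3) = x0 ^ 2 + x0 * x1 + a * x1 ^ 2 + b * (x2 ^ 2 + x2 * x3 + a * x3 ^ 2)"

lemma qt_zero: "(0::'a::ab_group_add qt) = Qt 0 0 0 0" by (simp add: zero_qt_def)

lemma qtr_add[simp]: "qtr (x + y) = qtr x + qtr (y::'a::field qt)" by (cases x; cases y) simp
lemma qtr_sc[simp]: "qtr (qsc c x) = c * qtr x" by (cases x) simp
lemma qtr_qs[simp]: "qtr (qs c) = 0" by (simp add: qs_def)
lemma qtr_zero[simp]: "qtr (0::'a::field qt) = 0" by (simp add: qt_zero)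
lemma qtr_bar[simp]: "qtr (qbar x) = qtr x" by (cases x) simp
lemma qsc_add[simp]: "qsc c (x + y) = qsc c x + qsc c y" by (cases x; cases y) (simp add: algebra_simps)
lemma qsc_add2: "qsc (c + d) x = qsc c x + qsc d x" by (cases x) (simp add: algebra_simps)
lemma qsc_qsc[simp]: "qsc c (qsc d x) = qsc (c * d) x" by (cases x) (simp add: algebra_simps)
lemma qsc_one[simp]: "qsc 1 x = x" by (cases x) simp
lemma qsc_zero[simp]: "qsc 0 x = 0" "qsc c 0 = 0" by (cases x) (simp_all add: qt_zero)
lemma qsc_eq_zero: "qsc c x = 0 \<longleftrightarrow> c = 0 \<or> x = 0" by (cases x) (auto simp: qt_zero)
lemma qsc_qs[simp]: "qsc c (qs d) = qs (c * d)" by (simp add: qs_def)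
lemma qs_add: "qs c + qs d = qs (c + d)" by (simp add: qs_def)
lemma qs_zero[simp]: "qs 0 = 0" by (simp add: qs_def qt_zero)
lemma qs_inj[simp]: "qs c = qs d \<longleftrightarrow> c = d" by (simp add: qs_def)
lemma qs_eq0[simp]: "qs c = 0 \<longleftrightarrow> c = 0" by (simp add: qs_def qt_zero)
lemma bar_add[simp]: "qbar (x + y) = qbar x + qbar y" by (cases x; cases y) simp
lemma bar_sc[simp]: "qbar (qsc c x) = qsc c (qbar x)" by (cases x) (simp add: algebra_simps)
lemma bar_qs[simp]: "qbar (qs c) = qs c" by (simp add: qs_def)

lemma qtwo_x_gen: "(2::'a::field) = 0 \<Longrightarrow> (x::'a qt) + x = 0"
  by (cases x) (simp add: qt_zero flip: mult_2)
lemma qtwo_x2_gen: "(2::'a::field) = 0 \<Longrightarrow> (x::'a qt) + (x + y) = y"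
  by (metis add.assoc qtwo_x_gen add_0)
lemma qneg_x_gen: "(2::'a::field) = 0 \<Longrightarrow> - (x::'a qt) = x"
  by (metis add_eq_0_iff qtwo_x_gen)
lemma qminus_x_gen: "(2::'a::field) = 0 \<Longrightarrow> (x::'a qt) - y = x + y"
  by (simp add: qneg_x_gen)

lemma bar_bar_gen: "(2::'a::field) = 0 \<Longrightarrow> qbar (qbar (x::'a qt)) = x"
  by (cases x) (simp add: add.assoc flip: mult_2)
lemma add_bar_gen: "(2::'a::field) = 0 \<Longrightarrow> (x::'a qt) + qbar x = qs (qtr x)"
  by (cases x) (simp add: qs_def add.assoc flip: mult_2)

locale c2 =
  fixes a b :: "'a::field"
  assumes two: "(2::'a) = 0"
begin

abbreviation mul (infixl "\<cdot>" 70) where "x \<cdot> y \<equiv> qm a b x y"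

lemma two_x[simp]: "(x::'a) + x = 0" using two by (metis mult_2 mult_zero_left)
lemma two_x2[simp]: "(x::'a) + (x + y) = y" by (metis add.assoc two_x add_0)
lemma neg_x[simp]: "- (x::'a) = x" using two_x by (metis add_eq_0_iff)
lemma minus_x[simp]: "(x::'a) - y = x + y" by (simp add: diff_conv_add_uminus)
lemmas qtwo_x[simp] = qtwo_x_gen[OF two]
lemmas qtwo_x2[simp] = qtwo_x2_gen[OF two]
lemmas qneg_x[simp] = qneg_x_gen[OF two]
lemmas qminus_x[simp] = qminus_x_gen[OF two]

lemma assoc[simp]: "(x \<cdot> y) \<cdot> z = x \<cdot> (y \<cdot> z)"
  by (cases x; cases y; cases z; simp add: algebra_simps two)
lemma distl[simp]: "x \<cdot> (y + z) = x \<cdot> y + x \<cdot> z"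
  by (cases x; cases y; cases z; simp add: algebra_simps)
lemma distr[simp]: "(y + z) \<cdot> x = y \<cdot> x + z \<cdot> x"
  by (cases x; cases y; cases z; simp add: algebra_simps)
lemma scl[simp]: "qsc c x \<cdot> y = qsc c (x \<cdot> y)"
  by (cases x; cases y; simp add: algebra_simps)
lemma scr[simp]: "x \<cdot> qsc c y = qsc c (x \<cdot> y)"
  by (cases x; cases y; simp add: algebra_simps)
lemma qsl[simp]: "qs c \<cdot> y = qsc c y"
  by (cases y; simp add: qs_def algebra_simps)
lemma qsr[simp]: "y \<cdot> qs c = qsc c y"
  by (cases y; simp add: qs_def algebra_simps)
lemma zl[simp]: "0 \<cdot> y = 0" by (cases y; simp add: qt_zero)
lemma zr[simp]: "y \<cdot> 0 = 0" by (cases y; simp add: qt_zero)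
lemma bar_mul[simp]: "qbar (x \<cdot> y) = qbar y \<cdot> qbar x"
  by (cases x; cases y; simp add: algebra_simps two)
lemmas bar_bar[simp] = bar_bar_gen[OF two]
lemmas add_bar = add_bar_gen[OF two]
lemma mul_bar: "x \<cdot> qbar x = qs (qn a b x)"
  by (cases x; simp add: qs_def algebra_simps power2_eq_square two)
lemma bar_mul': "qbar x \<cdot> x = qs (qn a b x)"
  by (cases x; simp add: qs_def algebra_simps power2_eq_square two)
lemma tr_comm: "qtr (x \<cdot> y) = qtr (y \<cdot> x)"
  by (cases x; cases y; simp add: algebra_simps)
lemma tr_sq: "qtr (x \<cdot> x) = qtr x ^ 2"
  by (cases x; simp add: algebra_simps power2_eq_square)

end

definition qu :: "'a::field qt" where "qu = Qt 0 1 0 0"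
definition qv :: "'a::field qt" where "qv = Qt 0 0 1 0"

context c2 begin

lemma quu: "qu \<cdot> qu = qs a + qu" by (simp add: qu_def qs_def)
lemma qvv: "qv \<cdot> qv = qs b" by (simp add: qv_def qs_def)
lemma qvu: "qv \<cdot> qu = qu \<cdot> qv + qv" by (simp add: qu_def qv_def)
lemma bar_qu: "qbar qu = qs 1 + qu" by (simp add: qu_def qs_def)
lemma bar_qv: "qbar qv = qv" by (simp add: qv_def)
lemma bar_quv: "qbar (qu \<cdot> qv) = qu \<cdot> qv" by (simp add: qu_def qv_def)
lemma qtr_qu: "qtr qu = 1" by (simp add: qu_def)
lemma qtr_qv: "qtr qv = 0" by (simp add: qv_def)
lemma qtr_quv: "qtr (qu \<cdot> qv) = 0" by (simp add: qu_def qv_def)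
lemma decomp: "Qt x0 x1 x2 x3 = qs x0 + qsc x1 qu + qsc x2 qv + qsc x3 (qu \<cdot> qv)"
  by (simp add: qu_def qv_def qs_def)
lemma qv_ne: "qv \<noteq> 0" by (simp add: qv_def qt_zero)

lemma L1_div:
  assumes "D = P0^2 + R0^2 * \<alpha>" "D \<noteq> 0"
  shows "(P^2 + R^2 * \<alpha>) / D = ((P*P0 + R*R0*\<alpha>)/D)^2 + ((P*R0 + R*P0)/D)^2 * (\<alpha>::'a)"
proof -
  have e: "(P^2 + R^2 * \<alpha>) * D = (P*P0 + R*R0*\<alpha>)^2 + (P*R0 + R*P0)^2 * \<alpha>"
    unfolding assms(1) by (simp add: power2_eq_square algebra_simps two)
  have "(P^2 + R^2 * \<alpha>) / D = ((P^2 + R^2 * \<alpha>) * D) / D^2"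
    using assms(2) by (simp add: power2_eq_square)
  also have "\<dots> = ((P*P0 + R*R0*\<alpha>)/D)^2 + ((P*R0 + R*P0)/D)^2 * \<alpha>"
    unfolding e by (simp add: power_divide add_divide_distrib[symmetric] times_divide_eq_left)
  finally show ?thesis .
qed

end

context c2 begin

lemma quat_main:
  fixes sg :: "'a qt \<Rightarrow> 'a qt" and z0 :: "'a qt"
  assumes bnz: "b \<noteq> 0"
  and sadd: "\<And>x y. sg (x + y) = sg x + sg y"
  and ssc: "\<And>c x. sg (qsc c x) = qsc c (sg x)"
  and santi: "\<And>x y. sg (x \<cdot> y) = sg y \<cdot> sg x"
  and sinv: "\<And>x. sg (sg x) = x"
  and northo: "\<And>z. qs 1 \<noteq> z + sg z"
  and alpha: "qn a b (z0 + sg z0) = \<alpha>" and anz: "\<alpha> \<noteq> 0"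
  shows "\<exists>h. sg h = h \<and> qtr h = 1 \<and> (\<forall>x z. qtr (h \<cdot> (x \<cdot> sg z)) = qtr (h \<cdot> (z \<cdot> sg x)))
        \<and> (\<forall>x. \<exists>p q. qtr (h \<cdot> (x \<cdot> sg x)) = p^2 + q^2 * \<alpha>)"
proof -
  have nobar: False if h: "\<And>p. sg p = qbar p"
  proof -
    have "qu + sg qu = qs 1" using h add_bar[of qu] by (simp add: qtr_qu)
    thus False using northo[of qu] by simp
  qed
  define e where "e = sg (qs 1)"
  have se: "sg e = qs 1" unfolding e_def by (simp add: sinv)
  have "sg (e \<cdot> qs 1) = sg (qs 1) \<cdot> sg e" by (rule santi)
  hence "sg e = e" by (simp add: se flip: e_def)
  hence s1: "sg (qs 1) = qs 1" using se e_def by simp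
  have sqs: "sg (qs c) = qs c" for c
    using ssc[of c "qs 1"] s1 by simp
  have s0: "sg 0 = 0" using ssc[of 0 "qs 1"] by simp
  define U where "U = sg qu"
  define V where "V = sg qv"
  have UU: "U \<cdot> U = qs a + U" unfolding U_def
    by (metis santi sadd sqs quu)
  have VV: "V \<cdot> V = qs b" unfolding V_def by (metis santi sqs qvv)
  have UV: "U \<cdot> V = V \<cdot> U + V" unfolding U_def V_def by (metis santi sadd qvu)
  have UUx: "U \<cdot> (U \<cdot> x) = qsc a x + U \<cdot> x" for x
  proof -
    have "U \<cdot> (U \<cdot> x) = (U \<cdot> U) \<cdot> x" by simp
    also have "\<dots> = qsc a x + U \<cdot> x" by (simp add: UU)
    finally show ?thesis .
  qed
  have VVx: "V \<cdot> (V \<cdot> x) = qsc b x" for x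
  proof -
    have "V \<cdot> (V \<cdot> x) = (V \<cdot> V) \<cdot> x" by simp
    also have "\<dots> = qsc b x" by (simp add: VV)
    finally show ?thesis .
  qed
  have UVx: "U \<cdot> (V \<cdot> x) = V \<cdot> (U \<cdot> x) + V \<cdot> x" for x
  proof -
    have "U \<cdot> (V \<cdot> x) = (U \<cdot> V) \<cdot> x" by simp
    also have "\<dots> = V \<cdot> (U \<cdot> x) + V \<cdot> x" by (simp add: UV)
    finally show ?thesis .
  qed
  define vi where "vi = qsc (1/b) qv"
  have bvi: "qsc b vi = qv" using bnz by (simp add: vi_def)
  have viv: "vi \<cdot> qv = qs 1" using bnz by (simp add: vi_def qvv)
  have viu: "vi \<cdot> qu = qu \<cdot> vi + vi" by (simp add: vi_def qvu)
  have quux: "x \<cdot> (qu \<cdot> qu) = qsc a x + x \<cdot> qu" for x by (simp add: quu)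
  define k1 where "k1 t = U \<cdot> t + t \<cdot> qu" for t
  define K1 where "K1 t = k1 t + V \<cdot> (k1 t \<cdot> vi)" for t
  have k1U: "U \<cdot> k1 t = k1 t \<cdot> (qs 1 + qu)" for t
    by (simp add: k1_def UUx quu add_ac)
  have k1Ux: "U \<cdot> (k1 t \<cdot> x) = k1 t \<cdot> (x + qu \<cdot> x)" for t x
  proof -
    have "U \<cdot> (k1 t \<cdot> x) = (U \<cdot> k1 t) \<cdot> x" by simp
    also have "\<dots> = k1 t \<cdot> (x + qu \<cdot> x)" by (simp add: k1U)
    finally show ?thesis .
  qed
  have K1U: "U \<cdot> K1 t = K1 t \<cdot> (qs 1 + qu)" for t
  proof -
    have "U \<cdot> K1 t = U \<cdot> k1 t + V \<cdot> (k1 t \<cdot> (vi + qu \<cdot> vi)) + V \<cdot> (k1 t \<cdot> vi)"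
      by (simp add: K1_def UVx k1Ux add_ac)
    also have "\<dots> = K1 t \<cdot> (qs 1 + qu)"
      by (simp add: K1_def k1U viu add_ac)
    finally show ?thesis .
  qed
  have K1V: "V \<cdot> K1 t = K1 t \<cdot> qv" for t
  proof -
    have "V \<cdot> K1 t = V \<cdot> k1 t + qsc b (k1 t \<cdot> vi)"
      by (simp add: K1_def VVx)
    also have "qsc b (k1 t \<cdot> vi) = k1 t \<cdot> qv" using bvi by (metis scr)
    finally show ?thesis by (simp add: K1_def viv add_ac)
  qed
  have K10: "V \<cdot> k1 t = k1 t \<cdot> qv" if "K1 t = 0" for t
  proof -
    from that have eq: "k1 t = V \<cdot> (k1 t \<cdot> vi)" unfolding K1_def
      by (metis add_eq_0_iff qneg_x)
    have "V \<cdot> k1 t = V \<cdot> (V \<cdot> (k1 t \<cdot> vi))" using eq by metis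
    also have "\<dots> = qsc b (k1 t \<cdot> vi)" by (simp add: VVx)
    also have "\<dots> = k1 t \<cdot> qv" using bvi by (metis scr)
    finally show ?thesis .
  qed
  have "\<exists>t. k1 t \<noteq> 0"
  proof (cases "U + qu = 0")
    case True
    hence "U = qu" by (metis add_eq_0_iff qneg_x)
    hence "k1 qv = qv" by (simp add: k1_def qvu)
    thus ?thesis using qv_ne by metis
  next
    case False
    hence "k1 (qs 1) \<noteq> 0" by (simp add: k1_def)
    thus ?thesis by blast
  qed
  then obtain t where t: "k1 t \<noteq> 0" by blast
  obtain k where knz: "k \<noteq> 0" and kU: "U \<cdot> k = k \<cdot> (qs 1 + qu)" and kV: "V \<cdot> k = k \<cdot> qv"
  proof (cases "K1 t = 0")
    case True
    show ?thesis by (rule that[OF t k1U K10[OF True]])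
  next
    case False
    show ?thesis by (rule that[OF False K1U K1V])
  qed
  have C: "sg p \<cdot> k = k \<cdot> qbar p" for p
  proof (cases p)
    case (Qt p0 p1 p2 p3)
    have e1: "qv \<cdot> (qs 1 + qu) = qu \<cdot> qv" by (simp add: qvu)
    have VUk: "V \<cdot> (U \<cdot> k) = k \<cdot> (qu \<cdot> qv)"
    proof -
      have "V \<cdot> (U \<cdot> k) = (V \<cdot> k) \<cdot> (qs 1 + qu)" by (simp add: kU)
      also have "\<dots> = k \<cdot> (qv \<cdot> (qs 1 + qu))" by (simp add: kV del: distl)
      finally show ?thesis by (simp add: e1 del: distl)
    qed
    have "sg p = qs p0 + qsc p1 U + qsc p2 V + qsc p3 (V \<cdot> U)"
      unfolding Qt decomp by (simp add: sadd ssc santi sqs U_def V_def)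
    hence "sg p \<cdot> k = qsc p0 k + qsc p1 (U \<cdot> k) + qsc p2 (V \<cdot> k) + qsc p3 (V \<cdot> (U \<cdot> k))"
      by simp
    also have "\<dots> = k \<cdot> qbar p"
      unfolding Qt decomp using kU kV VUk by (simp add: bar_qu bar_qv bar_quv qvu)
    finally show ?thesis .
  qed
  have trk: "qbar k = k"
  proof -
    have A: "qbar k \<cdot> qbar (sg q) = q \<cdot> qbar k" for q
      using arg_cong[OF C[of q], of qbar] by simp
    have B: "q \<cdot> k = k \<cdot> qbar (sg q)" for q
      using C[of "sg q"] by (simp add: sinv)
    define tk where "tk = qtr k"
    have ktk: "k + qbar k = qs tk" unfolding tk_def by (rule add_bar)
    have "q \<cdot> (k + qbar k) = (k + qbar k) \<cdot> qbar (sg q)" for q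
      using A[of q] B[of q] by simp
    hence E: "qsc tk q = qsc tk (qbar (sg q))" for q using ktk by simp
    have "tk = 0"
    proof (rule ccontr)
      assume "tk \<noteq> 0"
      hence "q = qbar (sg q)" for q using E[of q]
        by (metis qsc_qsc qsc_one field_class.field_inverse)
      hence "sg q = qbar q" for q by (metis bar_bar)
      thus False using nobar by blast
    qed
    thus ?thesis using ktk by (metis add_eq_0_iff qneg_x qs_zero)
  qed
  define y where "y = z0 + sg z0"
  define l where "l = qtr (z0 \<cdot> k)"
  have yk: "y \<cdot> k = qs l"
  proof -
    have "y \<cdot> k = z0 \<cdot> k + qbar (z0 \<cdot> k)" unfolding y_def by (simp add: C trk)
    also have "\<dots> = qs l" unfolding l_def by (rule add_bar)
    finally show ?thesis .
  qed
  have byy: "qbar y \<cdot> y = qs \<alpha>" using bar_mul'[of y] alpha y_def by simp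
  have byyk: "qbar y \<cdot> (y \<cdot> k) = qsc \<alpha> k"
  proof -
    have "qbar y \<cdot> (y \<cdot> k) = (qbar y \<cdot> y) \<cdot> k" by simp
    thus ?thesis using byy by simp
  qed
  have ak: "qsc \<alpha> k = qsc l (qbar y)" using byyk yk by simp
  have lnz: "l \<noteq> 0"
  proof
    assume "l = 0"
    hence "qsc \<alpha> k = 0" using ak by simp
    thus False using anz knz by (simp add: qsc_eq_zero)
  qed
  define c where "c = l / \<alpha>"
  have cnz: "c \<noteq> 0" using lnz anz by (simp add: c_def)
  have kform: "k = qsc c (qbar y)"
  proof -
    have "k = qsc (1/\<alpha>) (qsc \<alpha> k)" using anz by simp
    also have "\<dots> = qsc c (qbar y)" unfolding ak c_def by simp
    finally show ?thesis .
  qed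
  define \<beta> where "\<beta> = qn a b k"
  have kk: "k \<cdot> k = qs \<beta>" using mul_bar[of k] trk \<beta>_def by simp
  have beta: "\<beta> = c^2 * \<alpha>"
  proof -
    have "k \<cdot> qbar k = qsc c (qbar y) \<cdot> qsc c y" by (subst kform)+ simp
    also have "\<dots> = qs (c^2 * \<alpha>)" by (simp add: byy power2_eq_square)
    finally show ?thesis using kk trk by simp
  qed
  have bnz2: "\<beta> \<noteq> 0" using beta cnz anz by simp
  have sgf: "qsc \<beta> (sg p) = k \<cdot> (qbar p \<cdot> k)" for p
  proof -
    have "sg p \<cdot> (k \<cdot> k) = (sg p \<cdot> k) \<cdot> k" by simp
    thus ?thesis using kk C[of p] by simp
  qed
  have trs: "qtr (sg p) = qtr p" for p
  proof -
    have "\<beta> * qtr (sg p) = qtr (k \<cdot> (qbar p \<cdot> k))" using arg_cong[OF sgf[of p], of qtr] by simp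
    also have "\<dots> = qtr ((qbar p \<cdot> k) \<cdot> k)" by (rule tr_comm)
    also have "\<dots> = \<beta> * qtr p" using kk by simp
    finally show ?thesis using bnz2 by simp
  qed
  define Q where "Q p = qtr (p \<cdot> sg p)" for p
  have Qf: "\<beta> * Q p = \<beta> * qtr p ^ 2 + qtr (p \<cdot> k) ^ 2" for p
  proof -
    have bp: "qbar p = qs (qtr p) + p" using add_bar[of p]
      by (metis add.commute qtwo_x2)
    have "\<beta> * Q p = qtr (p \<cdot> qsc \<beta> (sg p))" unfolding Q_def by simp
    also have "\<dots> = qtr (p \<cdot> (k \<cdot> (qbar p \<cdot> k)))" by (simp only: sgf)
    also have "\<dots> = qtr p * (\<beta> * qtr p) + qtr (p \<cdot> (k \<cdot> (p \<cdot> k)))"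
    proof -
      have "k \<cdot> (qs (qtr p) \<cdot> k) = qsc (qtr p) (qs \<beta>)" using kk by simp
      thus ?thesis unfolding bp by (simp del: qsl add: kk)
    qed
    also have "qtr (p \<cdot> (k \<cdot> (p \<cdot> k))) = qtr (p \<cdot> k) ^ 2" using tr_sq[of "p \<cdot> k"] by simp
    finally show ?thesis by (simp add: power2_eq_square algebra_simps)
  qed
  have QL: "Q p = qtr p ^ 2 + (qtr (p \<cdot> k) / (c * \<alpha>))^2 * \<alpha>" for p
  proof -
    have "Q p = qtr p ^ 2 + qtr (p \<cdot> k) ^ 2 / \<beta>" using Qf[of p] bnz2
      by (simp add: field_simps)
    thus ?thesis using beta anz cnz by (simp add: power_divide power_mult_distrib power2_eq_square)
  qed
  have Qin: "\<exists>P R. Q p = P^2 + R^2 * \<alpha>" for p using QL by blast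
  obtain w where wQ: "Q w \<noteq> 0"
  proof (rule ccontr)
    assume "\<not> thesis"
    hence z: "Q w = 0" for w using that by blast
    have z1: "qtr (qv \<cdot> k) = 0" using z[of qv] QL[of qv] anz cnz by (simp add: qtr_qv)
    have z2: "qtr ((qu \<cdot> qv) \<cdot> k) = 0" using z[of "qu \<cdot> qv"] QL[of "qu \<cdot> qv"] anz cnz
      by (simp add: qtr_quv del: assoc)
    obtain k0 k1' k2 k3 where kq: "k = Qt k0 k1' k2 k3" by (cases k)
    have "k1' = 0" using trk kq by simp
    moreover have "k3 = 0" using z1 kq bnz by (simp add: qv_def)
    moreover have "k2 = 0" using z2 kq bnz by (simp add: qv_def qu_def)
    ultimately have kk0: "k = qs k0" using kq by (simp add: qs_def)
    hence k0: "k0 \<noteq> 0" using knz by simp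
    have "sg p = qbar p" for p
    proof -
      have "qsc k0 (sg p) = qsc k0 (qbar p)" using C[of p] kk0 by simp
      hence "qsc (1/k0) (qsc k0 (sg p)) = qsc (1/k0) (qsc k0 (qbar p))" by simp
      thus ?thesis using k0 by simp
    qed
    thus False using nobar by blast
  qed
  define T where "T = Q w"
  define h where "h = qsc (1/T) (w \<cdot> sg w)"
  have sh: "sg h = h" unfolding h_def by (simp add: ssc santi sinv)
  have th: "qtr h = 1" unfolding h_def using wQ by (simp add: T_def Q_def)
  have sym: "qtr (h \<cdot> (x \<cdot> sg z)) = qtr (h \<cdot> (z \<cdot> sg x))" for x z
  proof -
    have "qtr (h \<cdot> (x \<cdot> sg z)) = qtr (sg (h \<cdot> (x \<cdot> sg z)))" by (simp only: trs)
    also have "sg (h \<cdot> (x \<cdot> sg z)) = (z \<cdot> sg x) \<cdot> h" by (simp only: santi sinv sh)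
    also have "qtr ((z \<cdot> sg x) \<cdot> h) = qtr (h \<cdot> (z \<cdot> sg x))" by (rule tr_comm)
    finally show ?thesis .
  qed
  have diag: "\<exists>p q. qtr (h \<cdot> (x \<cdot> sg x)) = p^2 + q^2 * \<alpha>" for x
  proof -
    have "qtr (h \<cdot> (x \<cdot> sg x)) = qtr (w \<cdot> (sg w \<cdot> (x \<cdot> sg x))) / T"
      unfolding h_def by simp
    also have "qtr (w \<cdot> (sg w \<cdot> (x \<cdot> sg x))) = qtr ((sg w \<cdot> (x \<cdot> sg x)) \<cdot> w)" by (rule tr_comm)
    also have "\<dots> = Q (sg w \<cdot> x)" unfolding Q_def by (simp add: santi sinv)
    finally have eq: "qtr (h \<cdot> (x \<cdot> sg x)) = Q (sg w \<cdot> x) / T" .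
    obtain P R where PR: "Q (sg w \<cdot> x) = P^2 + R^2 * \<alpha>" using Qin by blast
    obtain P0 R0 where PR0: "T = P0^2 + R0^2 * \<alpha>" using Qin T_def by blast
    show ?thesis unfolding eq PR using L1_div[OF PR0] wQ T_def by blast
  qed
  show ?thesis using sh th sym diag by blast
qed

end

definition tq :: "(nat \<Rightarrow> 'a) \<Rightarrow> 'a qt" where "tq x = Qt (x 0) (x 1) (x 2) (x 3)"
fun fq :: "'a::zero qt \<Rightarrow> nat \<Rightarrow> 'a" where
  "fq (Qt x0 x1 x2 x3) = (\<lambda>m. if m = 0 then x0 else if m = 1 then x1 else if m = 2 then x2 else if m = 3 then x3 else 0)"
definition sgM :: "(nat \<Rightarrow> nat \<Rightarrow> 'a::field) \<Rightarrow> 'a qt \<Rightarrow> 'a qt" where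
  "sgM M p = tq (qapp M (fq p))"
definition E :: "nat \<Rightarrow> 'a::field qt" where "E k = tq (\<lambda>j. of_bool (j = k))"

lemma lt4: "{..<4::nat} = {0,1,2,3}" by auto

lemma tq_fq[simp]: "tq (fq p) = p" by (cases p) (simp add: tq_def)
lemma tq_eq: "tq x = tq y \<longleftrightarrow> (\<forall>m<4. x m = y m)"
proof
  assume "tq x = tq y" thus "\<forall>m<4. x m = y m" unfolding tq_def
    by (auto simp: less_Suc_eq numeral_eq_Suc)
qed (simp add: tq_def)

lemma tq_qmul: "tq (qmul a b x y) = qm a b (tq x) (tq y)"
  by (simp add: tq_def qmul_def qconst_def qtab_def lt4 algebra_simps)

lemma tq_qapp_cong: "tq x = tq y \<Longrightarrow> tq (qapp M x) = tq (qapp M y)"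
  unfolding tq_eq qapp_def by (simp add: lt4)

lemma tq_sub: "tq (\<lambda>m. x m - y m) = tq x - tq y" by (simp add: tq_def)

lemma sgM_add: "sgM M (x + y) = sgM M x + sgM M y"
  by (cases x; cases y) (simp add: sgM_def tq_def qapp_def lt4 algebra_simps)
lemma sgM_sc: "sgM M (qsc c x) = qsc c (sgM M x)"
  by (cases x) (simp add: sgM_def tq_def qapp_def lt4 algebra_simps)

lemma sgM_anti:
  assumes "q_involution a b M"
  shows "sgM M (qm a b p q) = qm a b (sgM M q) (sgM M p)"
proof -
  have "sgM M (qm a b p q) = tq (qapp M (qmul a b (fq p) (fq q)))"
    unfolding sgM_def by (rule tq_qapp_cong) (simp add: tq_qmul)
  also have "\<dots> = tq (qmul a b (qapp M (fq q)) (qapp M (fq p)))"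
    using assms unfolding q_involution_def tq_eq by blast
  finally show ?thesis by (simp add: tq_qmul sgM_def)
qed

lemma sgM_inv:
  assumes "q_involution a b M"
  shows "sgM M (sgM M p) = p"
proof -
  have "sgM M (sgM M p) = tq (qapp M (qapp M (fq p)))"
    unfolding sgM_def by (rule tq_qapp_cong) simp
  also have "\<dots> = tq (fq p)"
    using assms unfolding q_involution_def tq_eq by blast
  finally show ?thesis by simp
qed

lemma tq_qone: "tq qone = qs 1" by (simp add: tq_def qone_def qs_def)

lemma northo_conv:
  assumes c2: "(2::'a::field) = 0" and "\<not> q_alt M (qone :: nat \<Rightarrow> 'a)"
  shows "qs 1 \<noteq> z + sgM M z"
proof
  assume h: "qs 1 = z + sgM M z"
  have "\<forall>m<4. qone m = fq z m - qapp M (fq z) m"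
  proof -
    have "tq (qone::nat \<Rightarrow> 'a) = tq (\<lambda>m. fq z m - qapp M (fq z) m)"
      unfolding tq_qone tq_sub using h qminus_x_gen[OF c2] by (simp add: sgM_def)
    thus ?thesis unfolding tq_eq .
  qed
  thus False using assms(2) unfolding q_alt_def by blast
qed

lemma disc_conv:
  assumes c2: "(2::'a::field) = 0" and "q_disc_rep a b M (\<alpha>::'a)"
  shows "\<alpha> \<noteq> 0 \<and> (\<exists>z0. qn a b (z0 + sgM M z0) = \<alpha>)"
proof -
  obtain y x where a: "\<alpha> \<noteq> 0" and y: "\<forall>m<4. y m = x m - qapp M x m" and n: "qnrd a b y = \<alpha>"
    using assms(2) unfolding q_disc_rep_def q_alt_def by blast
  have s: "sgM M (tq x) = tq (qapp M x)" unfolding sgM_def by (rule tq_qapp_cong) simp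
  have "tq y = tq (\<lambda>m. x m - qapp M x m)" using y unfolding tq_eq by simp
  also have "\<dots> = tq x + sgM M (tq x)" unfolding tq_sub s by (simp add: qminus_x_gen[OF c2])
  finally have ty: "tq y = tq x + sgM M (tq x)" .
  have "qnrd a b y = qn a b (tq y)" by (simp add: qnrd_def tq_def)
  hence "qn a b (tq x + sgM M (tq x)) = \<alpha>" using n ty by simp
  thus ?thesis using a by blast
qed

lemma qtr_lin: "qtr (qm a b h (tq z)) = (\<Sum>m<4. z m * qtr (qm a b h (E m)))"
  by (cases h) (simp add: tq_def E_def lt4 algebra_simps)

lemma fqE: "l < 4 \<Longrightarrow> fq (E l) j = of_bool (j = l)"
  by (auto simp: E_def tq_def less_Suc_eq numeral_eq_Suc)

lemma delta4: "(l::nat) < 4 \<Longrightarrow> (\<Sum>j<4. of_bool (j = l) * (g j::'a::field)) = g l"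
proof -
  assume l: "l < 4"
  have "(\<Sum>j<4. of_bool (j = l) * g j) = (\<Sum>j<4. if l = j then g j else 0)"
    by (rule sum.cong) auto
  thus ?thesis using l by simp
qed

lemma Bf_eq:
  assumes "k < 4" "l < 4"
  shows "(\<Sum>t<4. M l t * (\<Sum>m<4. qconst a b k t m * qtr (qm a b h (E m))))
        = qtr (qm a b h (qm a b (E k) (sgM M (E l))))"
proof -
  define g where "g m = qtr (qm a b h (E m))" for m
  have s: "sgM M (E l) = tq (\<lambda>t. M l t)"
    unfolding sgM_def tq_eq qapp_def using assms by (simp add: fqE delta4)
  have eq: "qm a b (E k) (sgM M (E l)) = tq (qmul a b (\<lambda>j. of_bool (j = k)) (\<lambda>t. M l t))"
    by (subst s) (simp add: tq_qmul E_def)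
  have "qtr (qm a b h (qm a b (E k) (sgM M (E l))))
      = (\<Sum>m<4. qmul a b (\<lambda>j. of_bool (j = k)) (\<lambda>t. M l t) m * g m)"
    unfolding g_def by (simp only: eq qtr_lin)
  also have "\<dots> = (\<Sum>m<4. (\<Sum>t<4. M l t * qconst a b k t m) * g m)"
  proof (rule sum.cong[OF refl])
    fix m
    have "qmul a b (\<lambda>j. of_bool (j = k)) (\<lambda>t. M l t) m
        = (\<Sum>k'<4. of_bool (k' = k) * (\<Sum>t<4. M l t * qconst a b k' t m))"
      unfolding qmul_def by (simp only: sum_distrib_left mult.assoc)
    also have "\<dots> = (\<Sum>t<4. M l t * qconst a b k t m)" using assms(1) by (rule delta4)
    finally show "qmul a b (\<lambda>j. of_bool (j = k)) (\<lambda>t. M l t) m * g m =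
         (\<Sum>t<4. M l t * qconst a b k t m) * g m" by (simp only:)
  qed
  also have "\<dots> = (\<Sum>m<4. \<Sum>t<4. M l t * (qconst a b k t m * g m))"
    by (simp only: sum_distrib_right mult.assoc)
  also have "\<dots> = (\<Sum>t<4. \<Sum>m<4. M l t * (qconst a b k t m * g m))" by (rule sum.swap)
  also have "\<dots> = (\<Sum>t<4. M l t * (\<Sum>m<4. qconst a b k t m * g m))"
    by (simp only: sum_distrib_left)
  finally show ?thesis unfolding g_def by (rule sym)
qed

lemma quat_f:
  fixes a b \<alpha> :: "'a::field" and M :: "nat \<Rightarrow> nat \<Rightarrow> 'a"
  assumes c2: "(2::'a) = 0" and bnz: "b \<noteq> 0" and orth: "q_orthogonal a b M"
    and disc: "q_disc_rep a b M \<alpha>"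
  shows "\<exists>f. f 0 = 1 \<and>
     (\<forall>k<4. \<forall>l<4. (\<Sum>t<4. M l t * (\<Sum>m<4. qconst a b k t m * f m))
                 = (\<Sum>t<4. M k t * (\<Sum>m<4. qconst a b l t m * f m))) \<and>
     (\<forall>k<4. \<exists>p q. (\<Sum>t<4. M k t * (\<Sum>m<4. qconst a b k t m * f m)) = p^2 + q^2 * \<alpha>)"
proof -
  interpret c2 a b by unfold_locales (rule c2)
  have inv: "q_involution a b M" using orth unfolding q_orthogonal_def by blast
  obtain z0 where an: "\<alpha> \<noteq> 0" and z0: "qn a b (z0 + sgM M z0) = \<alpha>"
    using disc_conv[OF c2 disc] by blast
  have nalt: "\<not> q_alt M (qone :: nat \<Rightarrow> 'a)" using orth unfolding q_orthogonal_def by blast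
  note qm = quat_main[OF bnz sgM_add sgM_sc sgM_anti[OF inv] sgM_inv[OF inv]
        northo_conv[OF c2 nalt] z0 an]
  then obtain h where sh: "sgM M h = h" and th: "qtr h = 1"
    and sym: "\<forall>x z. qtr (h \<cdot> (x \<cdot> sgM M z)) = qtr (h \<cdot> (z \<cdot> sgM M x))"
    and dg: "\<forall>x. \<exists>p q. qtr (h \<cdot> (x \<cdot> sgM M x)) = p^2 + q^2 * \<alpha>"
    by blast
  define f where "f m = qtr (h \<cdot> E m)" for m
  have "f 0 = 1" unfolding f_def using th by (cases h) (simp add: E_def tq_def)
  moreover have "\<forall>k<4. \<forall>l<4. (\<Sum>t<4. M l t * (\<Sum>m<4. qconst a b k t m * f m))
                 = (\<Sum>t<4. M k t * (\<Sum>m<4. qconst a b l t m * f m))"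
  proof (intro allI impI)
    fix k l :: nat assume kl: "k < 4" "l < 4"
    show "(\<Sum>t<4. M l t * (\<Sum>m<4. qconst a b k t m * f m))
                 = (\<Sum>t<4. M k t * (\<Sum>m<4. qconst a b l t m * f m))"
      unfolding f_def Bf_eq[OF kl] Bf_eq[OF kl(2,1)] using sym by blast
  qed
  moreover have "\<forall>k<4. \<exists>p q. (\<Sum>t<4. M k t * (\<Sum>m<4. qconst a b k t m * f m)) = p^2 + q^2 * \<alpha>"
  proof (intro allI impI)
    fix k :: nat assume k: "k < 4"
    show "\<exists>p q. (\<Sum>t<4. M k t * (\<Sum>m<4. qconst a b k t m * f m)) = p^2 + q^2 * \<alpha>"
      unfolding f_def Bf_eq[OF k k] using dg by blast
  qed
  ultimately show ?thesis by (intro exI[of _ f] conjI)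
qed

lemma frob:
  assumes two: "(2::'a::field) = 0" and fin: "finite A"
  shows "(\<Sum>s\<in>A. g s)^2 = (\<Sum>s\<in>A. (g s :: 'a)^2)"
  using fin
proof (induction A rule: finite_induct)
  case empty thus ?case by simp
next
  case (insert a A)
  have "(g a + (\<Sum>s\<in>A. g s))^2 = g a ^2 + (\<Sum>s\<in>A. g s)^2 + 2 * (g a * (\<Sum>s\<in>A. g s))"
    by (simp add: power2_eq_square algebra_simps)
  thus ?case using insert two by simp
qed

lemma symsum:
  assumes two: "(2::'a::field) = 0" and fin: "finite A"
    and symK: "\<And>s t. s \<in> A \<Longrightarrow> t \<in> A \<Longrightarrow> K s t = K t s"
  shows "(\<Sum>s\<in>A. \<Sum>t\<in>A. g s * g t * K s t) = (\<Sum>s\<in>A. (g s)^2 * (K s s :: 'a))"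
  using fin symK
proof (induction A rule: finite_induct)
  case empty thus ?case by simp
next
  case (insert a A)
  have sy: "K s t = K t s" if "s \<in> A" "t \<in> A" for s t using insert.prems that by blast
  have cross: "(\<Sum>t\<in>A. g a * g t * K a t) = (\<Sum>s\<in>A. g s * g a * K s a)"
    by (rule sum.cong[OF refl]) (use insert.prems in \<open>auto simp: mult_ac\<close>)
  have "(\<Sum>s\<in>insert a A. \<Sum>t\<in>insert a A. g s * g t * K s t)
      = g a * g a * K a a + (\<Sum>t\<in>A. g a * g t * K a t)
        + ((\<Sum>s\<in>A. g s * g a * K s a) + (\<Sum>s\<in>A. \<Sum>t\<in>A. g s * g t * K s t))"
    using insert.hyps by (simp add: sum.distrib add_ac)
  also have "\<dots> = g a * g a * K a a + (\<Sum>s\<in>A. \<Sum>t\<in>A. g s * g t * K s t)"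
  proof -
    have "(\<Sum>t\<in>A. g a * g t * K a t) + (\<Sum>s\<in>A. g s * g a * K s a) = 0"
      unfolding cross using two by (metis mult_2 mult_zero_left)
    thus ?thesis by (simp add: algebra_simps)
  qed
  also have "\<dots> = (\<Sum>s\<in>insert a A. (g s)^2 * K s s)"
    using insert.hyps insert.IH[OF sy] by (simp add: power2_eq_square)
  finally show ?case .
qed

lemma sum_PiE_prod:
  "(\<Sum>r\<in>tidx n. \<Prod>i<n. g i (r i)) = (\<Prod>i<n. \<Sum>m<4. (g i m :: 'a::field))"
  unfolding tidx_def by (rule prod_sum_PiE[symmetric]) auto

lemma finite_tidx: "finite (tidx n)" unfolding tidx_def by (rule finite_PiE) auto

lemma tidx_lt: "r \<in> tidx n \<Longrightarrow> i < n \<Longrightarrow> r i < 4"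
  unfolding tidx_def by (auto simp: PiE_def Pi_def)

theorem corollary4p9:
  fixes n :: nat
    and a b :: "nat \<Rightarrow> 'a::field"
    and M :: "nat \<Rightarrow> nat \<Rightarrow> nat \<Rightarrow> 'a"
    and \<alpha> :: "nat \<Rightarrow> 'a"
    and x :: "(nat \<Rightarrow> nat) \<Rightarrow> 'a"
    and c :: 'a
  assumes char2: "CHAR('a) = 2"
    and quat: "\<forall>i<n. b i \<noteq> 0"
    and orth: "\<forall>i<n. q_orthogonal (a i) (b i) (M i)"
    and disc: "\<forall>i<n. q_disc_rep (a i) (b i) (M i) (\<alpha> i)"
    and sym: "x \<in> sym_plus n a b M"
    and sq: "tmul n a b x x = tscal n c"
  shows "c \<in> pfister_Q n \<alpha>"
proof -
  have two: "(2::'a) = 0" using of_nat_CHAR[where 'a='a] char2 by simp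
  define Pr where "Pr f i k l = (\<Sum>t<4. M i l t * (\<Sum>m<4. qconst (a i) (b i) k t m * f m))"
    for f :: "nat \<Rightarrow> 'a" and i k l
  define Phi where "Phi i f \<longleftrightarrow> f 0 = 1 \<and> (\<forall>k<4. \<forall>l<4. Pr f i k l = Pr f i l k) \<and>
      (\<forall>k<4. \<exists>p q. Pr f i k k = p^2 + q^2 * \<alpha> i)" for i f
  have ex: "\<forall>i\<in>{..<n}. \<exists>f. Phi i f"
  proof
    fix i assume "i \<in> {..<n}"
    hence i: "i < n" by simp
    show "\<exists>f. Phi i f" unfolding Phi_def Pr_def
      by (rule quat_f[OF two quat[rule_format, OF i] orth[rule_format, OF i] disc[rule_format, OF i]])
  qed
  obtain F where F: "\<forall>i\<in>{..<n}. Phi i (F i)" using bchoice[OF ex] by blast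
  have F0: "F i 0 = 1" if "i < n" for i using F that unfolding Phi_def by simp
  have Fsym: "Pr (F i) i k l = Pr (F i) i l k" if "i < n" "k < 4" "l < 4" for i k l
    using F that unfolding Phi_def by simp
  have Fdg: "\<exists>p q. Pr (F i) i k k = p^2 + q^2 * \<alpha> i" if "i < n" "k < 4" for i k
    using F that unfolding Phi_def by simp
  define P where "P i k t = (\<Sum>m<4. qconst (a i) (b i) k t m * F i m)" for i k t
  define B where "B i k l = Pr (F i) i k l" for i k l
  have B_def': "B i k l = (\<Sum>t<4. M i l t * P i k t)" for i k l unfolding B_def Pr_def P_def ..
  have ex2: "\<forall>ik\<in>{..<n} \<times> {..<4}. \<exists>pq::'a \<times> 'a.
       B (fst ik) (snd ik) (snd ik) = (fst pq)^2 + (snd pq)^2 * \<alpha> (fst ik)"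
  proof
    fix ik :: "nat \<times> nat" assume "ik \<in> {..<n} \<times> {..<4}"
    then have "fst ik < n" "snd ik < 4" by auto
    then obtain p q where "Pr (F (fst ik)) (fst ik) (snd ik) (snd ik) = p^2 + q^2 * \<alpha> (fst ik)"
      using Fdg by blast
    thus "\<exists>pq::'a \<times> 'a. B (fst ik) (snd ik) (snd ik) = (fst pq)^2 + (snd pq)^2 * \<alpha> (fst ik)"
      unfolding B_def by (intro exI[of _ "(p, q)"]) simp
  qed
  obtain G where G: "\<forall>ik\<in>{..<n} \<times> {..<4}.
       B (fst ik) (snd ik) (snd ik) = (fst (G ik))^2 + (snd (G ik))^2 * \<alpha> (fst ik)"
    using bchoice[OF ex2] by blast
  define pp where "pp i k = fst (G (i, k))" for i k
  define qq where "qq i k = snd (G (i, k))" for i k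
  have pq: "B i k k = (pp i k)^2 + (qq i k)^2 * \<alpha> i" if "i < n" "k < 4" for i k
    using G that unfolding pp_def qq_def by auto
  define T where "T = tidx n"
  have finT: "finite T" unfolding T_def by (rule finite_tidx)
  define \<psi> where "\<psi> z = (\<Sum>r\<in>T. z r * (\<Prod>i<n. F i (r i)))" for z :: "(nat \<Rightarrow> nat) \<Rightarrow> 'a"
  define r0 where "r0 = restrict (\<lambda>_. 0::nat) {..<n}"
  have r0T: "r0 \<in> T" unfolding r0_def T_def tidx_def by auto
  have psi_scal: "\<psi> (tscal n c) = c"
  proof -
    have "\<psi> (tscal n c) = (\<Sum>r\<in>T. if r = r0 then c * (\<Prod>i<n. F i (r i)) else 0)"
      unfolding \<psi>_def tscal_def r0_def by (rule sum.cong) auto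
    also have "\<dots> = c * (\<Prod>i<n. F i (r0 i))" using finT r0T by simp
    also have "(\<Prod>i<n. F i (r0 i)) = 1"
      by (rule prod.neutral) (auto simp: r0_def F0)
    finally show ?thesis by simp
  qed
  have pe: "(\<Sum>r\<in>T. \<Prod>i<n. qconst (a i) (b i) (s i) (t i) (r i) * F i (r i))
       = (\<Prod>i<n. P i (s i) (t i))" for s t
    unfolding T_def P_def by (rule sum_PiE_prod)
  have pe2: "(\<Sum>t\<in>T. \<Prod>i<n. M i (s' i) (t i) * P i (s i) (t i))
       = (\<Prod>i<n. B i (s i) (s' i))" for s s'
    unfolding T_def B_def' by (rule sum_PiE_prod)
  have psi_mul: "\<psi> (tmul n a b y z) = (\<Sum>s\<in>T. \<Sum>t\<in>T. y s * z t * (\<Prod>i<n. P i (s i) (t i)))" for y z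
  proof -
    have "\<psi> (tmul n a b y z) = (\<Sum>r\<in>T. (\<Sum>s\<in>T. \<Sum>t\<in>T. y s * z t *
            (\<Prod>i<n. qconst (a i) (b i) (s i) (t i) (r i))) * (\<Prod>i<n. F i (r i)))"
      unfolding \<psi>_def tmul_def T_def by (rule sum.cong) auto
    also have "\<dots> = (\<Sum>r\<in>T. \<Sum>s\<in>T. \<Sum>t\<in>T. y s * z t *
            (\<Prod>i<n. qconst (a i) (b i) (s i) (t i) (r i) * F i (r i)))"
      by (simp add: sum_distrib_right prod.distrib mult.assoc)
    also have "\<dots> = (\<Sum>s\<in>T. \<Sum>t\<in>T. \<Sum>r\<in>T. y s * z t *
            (\<Prod>i<n. qconst (a i) (b i) (s i) (t i) (r i) * F i (r i)))"
      by (subst sum.swap) (rule sum.cong[OF refl], rule sum.swap)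
    also have "\<dots> = (\<Sum>s\<in>T. \<Sum>t\<in>T. y s * z t *
            (\<Sum>r\<in>T. \<Prod>i<n. qconst (a i) (b i) (s i) (t i) (r i) * F i (r i)))"
      by (simp add: sum_distrib_left)
    also have "\<dots> = (\<Sum>s\<in>T. \<Sum>t\<in>T. y s * z t * (\<Prod>i<n. P i (s i) (t i)))"
      unfolding pe ..
    finally show ?thesis .
  qed
  have xT: "tinv n M x = x" using sym unfolding sym_plus_def by blast
  have "c = \<psi> (tmul n a b x (tinv n M x))" using psi_scal sq xT by simp
  also have "\<dots> = (\<Sum>s\<in>T. \<Sum>t\<in>T. x s * (\<Sum>s'\<in>T. x s' * (\<Prod>i<n. M i (s' i) (t i))) *
                   (\<Prod>i<n. P i (s i) (t i)))"
    unfolding psi_mul by (rule sum.cong[OF refl], rule sum.cong[OF refl]) (simp add: tinv_def T_def)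
  also have "\<dots> = (\<Sum>s\<in>T. \<Sum>t\<in>T. \<Sum>s'\<in>T. x s * x s' *
                   (\<Prod>i<n. M i (s' i) (t i) * P i (s i) (t i)))"
    by (intro sum.cong refl) (simp add: sum_distrib_left sum_distrib_right prod.distrib mult_ac)
  also have "\<dots> = (\<Sum>s\<in>T. \<Sum>s'\<in>T. \<Sum>t\<in>T. x s * x s' *
                   (\<Prod>i<n. M i (s' i) (t i) * P i (s i) (t i)))"
    by (rule sum.cong[OF refl], rule sum.swap)
  also have "\<dots> = (\<Sum>s\<in>T. \<Sum>s'\<in>T. x s * x s' * (\<Prod>i<n. B i (s i) (s' i)))"
    by (simp only: sum_distrib_left[symmetric] pe2)
  also have "\<dots> = (\<Sum>s\<in>T. (x s)^2 * (\<Prod>i<n. B i (s i) (s i)))"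
  proof (rule symsum[OF two finT])
    fix s t assume "s \<in> T" "t \<in> T"
    thus "(\<Prod>i<n. B i (s i) (t i)) = (\<Prod>i<n. B i (t i) (s i))"
      using Fsym tidx_lt unfolding B_def T_def by (intro prod.cong) auto
  qed
  finally have c1: "c = (\<Sum>s\<in>T. (x s)^2 * (\<Prod>i<n. B i (s i) (s i)))" .
  define W where "W S s = (\<Prod>i\<in>S. qq i (s i)) * (\<Prod>i\<in>{..<n} - S. pp i (s i))" for S s
  define v where "v S = (\<Sum>s\<in>T. x s * W S s)" for S
  have "c = (\<Sum>s\<in>T. (x s)^2 * (\<Sum>S\<in>Pow {..<n}. (\<Prod>i\<in>S. \<alpha> i) * (W S s)^2))"
  proof -
    have "(\<Prod>i<n. B i (s i) (s i)) = (\<Sum>S\<in>Pow {..<n}. (\<Prod>i\<in>S. \<alpha> i) * (W S s)^2)"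
      if "s \<in> T" for s
    proof -
      have "(\<Prod>i<n. B i (s i) (s i)) = (\<Prod>i<n. (qq i (s i))^2 * \<alpha> i + (pp i (s i))^2)"
        using pq tidx_lt that unfolding T_def by (intro prod.cong) (auto simp: add.commute)
      also have "\<dots> = (\<Sum>S\<in>Pow {..<n}. (\<Prod>i\<in>S. (qq i (s i))^2 * \<alpha> i) *
                                         (\<Prod>i\<in>{..<n} - S. (pp i (s i))^2))"
        by (rule prod_add) simp
      also have "\<dots> = (\<Sum>S\<in>Pow {..<n}. (\<Prod>i\<in>S. \<alpha> i) * (W S s)^2)"
        unfolding W_def by (simp add: prod.distrib power_mult_distrib prod_power_distrib mult_ac)
      finally show ?thesis .
    qed
    thus ?thesis using c1 by (auto intro!: sum.cong)
  qed
  also have "\<dots> = (\<Sum>S\<in>Pow {..<n}. (\<Prod>i\<in>S. \<alpha> i) * (\<Sum>s\<in>T. (x s * W S s)^2))"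
  proof -
    have "(\<Sum>s\<in>T. (x s)^2 * (\<Sum>S\<in>Pow {..<n}. (\<Prod>i\<in>S. \<alpha> i) * (W S s)^2))
        = (\<Sum>s\<in>T. \<Sum>S\<in>Pow {..<n}. (\<Prod>i\<in>S. \<alpha> i) * (x s * W S s)^2)"
      by (intro sum.cong refl) (simp add: sum_distrib_left power_mult_distrib mult_ac)
    also have "\<dots> = (\<Sum>S\<in>Pow {..<n}. \<Sum>s\<in>T. (\<Prod>i\<in>S. \<alpha> i) * (x s * W S s)^2)"
      by (rule sum.swap)
    finally show ?thesis by (simp only: sum_distrib_left)
  qed
  also have "\<dots> = (\<Sum>S\<in>Pow {..<n}. (\<Prod>i\<in>S. \<alpha> i) * v S * v S)"
    unfolding v_def frob[OF two finT, symmetric] by (simp add: power2_eq_square mult.assoc)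
  finally have cv: "c = pfister_form n \<alpha> v v" unfolding pfister_form_def .
  show ?thesis
  proof (cases "\<exists>S\<in>Pow {..<n}. v S \<noteq> 0")
    case True thus ?thesis unfolding pfister_Q_def cv by blast
  next
    case False
    hence "pfister_form n \<alpha> v v = 0" unfolding pfister_form_def by simp
    thus ?thesis unfolding pfister_Q_def cv by blast
  qed
qed

end
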